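(* Let $\alpha>0$ and $M>1$ be real numbers, and let $x\in[0,M]$. For $n\in\mathbb N$ define $$C_{\alpha,n}(M;x)=\sum_{k=0}^{\lfloor M\rfloor}f_n(k),\qquad f_n(t)=\begin{cases}0 & \text{if } t=0 \text{ or } x=0,\\ t^\alpha\cos^{2n}(\pi x/t) & \text{otherwise}.\end{cases}$$ Then the sequence $n\mapsto C_{\alpha,n}(M;x)$ is non-increasing and $\lim_{n\to\infty}C_{\alpha,n}(M;x)=\sigma_\alpha(x)$.
   Context: For $m\in\mathbb N$, $\sigma_\alpha(m)=\sum_{k\mid m}k^\alpha$ (sum over positive divisors $k$ of $m$), and $\sigma_\alpha$ is extended to $[0,\infty)$ by setting $\sigma_\alpha(x)=0$ for $x\in[0,\infty)\setminus\mathbb N$. The sum over $k$ runs over integers $0\le k\le\lfloor M\rfloor$. *)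

theory Defs
  imports "HOL-Analysis.Analysis"
begin

definition sigma_ext :: "real \<Rightarrow> real \<Rightarrow> real" where
  "sigma_ext \<alpha> x =
     (if \<exists>m::nat. m \<ge> 1 \<and> x = real m
      then (\<Sum>k\<in>{k::nat. k dvd (nat \<lfloor>x\<rfloor>)}. real k powr \<alpha>)
      else 0)"

definition f_term :: "real \<Rightarrow> nat \<Rightarrow> real \<Rightarrow> real \<Rightarrow> real" where
  "f_term \<alpha> n x t = (if t = 0 \<or> x = 0 then 0 else t powr \<alpha> * (cos (pi * x / t)) ^ (2 * n))"

definition C_seq :: "real \<Rightarrow> nat \<Rightarrow> real \<Rightarrow> real \<Rightarrow> real" where
  "C_seq \<alpha> n M x = (\<Sum>k\<in>{0..nat \<lfloor>M\<rfloor>}. f_term \<alpha> n x (real k))"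

end

theory Submission
  imports Defs
begin

definition g_lim :: "real \<Rightarrow> real \<Rightarrow> real \<Rightarrow> real" where
  "g_lim \<alpha> x t = (if t \<noteq> 0 \<and> x \<noteq> 0 \<and> (\<exists>j::int. x = of_int j * t) then t powr \<alpha> else 0)"

lemma cos2_one_iff: "cos y ^ 2 = 1 \<longleftrightarrow> (\<exists>i::int. y = of_int i * pi)"
proof -
  have "cos y ^ 2 = 1 \<longleftrightarrow> sin y = 0"
    using sin_cos_squared_add[of y] by (auto simp: power2_eq_square)
  thus ?thesis by (simp add: sin_zero_iff_int2)
qed

lemma term_props:
  fixes t :: real
  assumes "t > 0" "x > 0"
  shows "antimono (\<lambda>n. f_term \<alpha> n x t) \<and> (\<lambda>n. f_term \<alpha> n x t) \<longlonglongrightarrow> g_lim \<alpha> x t"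
proof -
  define q where "q = cos (pi * x / t) ^ 2"
  have fe: "\<And>n. f_term \<alpha> n x t = t powr \<alpha> * q ^ n"
    using assms by (simp add: f_term_def q_def power_mult)
  have q0: "0 \<le> q" "q \<le> 1" by (auto simp: q_def abs_square_le_1)
  have tp: "t powr \<alpha> \<ge> 0" by simp
  have am: "antimono (\<lambda>n. f_term \<alpha> n x t)"
    unfolding fe by (rule antimonoI, rule mult_left_mono[OF _ tp], rule power_decreasing) (use q0 in auto)
  have eq: "q = 1 \<longleftrightarrow> (\<exists>j::int. x = of_int j * t)"
  proof -
    have "q = 1 \<longleftrightarrow> (\<exists>i::int. pi * x / t = of_int i * pi)" unfolding q_def by (rule cos2_one_iff)
    also have "\<dots> \<longleftrightarrow> (\<exists>j::int. x = of_int j * t)"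
    proof -
      have "\<And>i::int. pi * x / t = of_int i * pi \<longleftrightarrow> x = of_int i * t"
        using assms pi_gt_zero by (auto simp: field_simps)
      thus ?thesis by simp
    qed
    finally show ?thesis .
  qed
  have lim: "(\<lambda>n. f_term \<alpha> n x t) \<longlonglongrightarrow> g_lim \<alpha> x t"
  proof (cases "q = 1")
    case True
    then show ?thesis using eq assms unfolding fe g_lim_def by simp
  next
    case False
    with q0 have "norm q < 1" by simp
    hence "(\<lambda>n. q ^ n) \<longlonglongrightarrow> 0" by (rule LIMSEQ_power_zero)
    hence "(\<lambda>n. t powr \<alpha> * q ^ n) \<longlonglongrightarrow> t powr \<alpha> * 0" by (intro tendsto_mult tendsto_const)
    then show ?thesis using False eq assms unfolding fe g_lim_def by simp
  qed
  show ?thesis using am lim by blast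
qed

theorem proposition2p1:
  fixes \<alpha> M x :: real
  assumes "\<alpha> > 0" and "M > 1" and "0 \<le> x" and "x \<le> M"
  shows "antimono (\<lambda>n. C_seq \<alpha> n M x) \<and> (\<lambda>n. C_seq \<alpha> n M x) \<longlonglongrightarrow> sigma_ext \<alpha> x"
proof (cases "x = 0")
  case True
  have "C_seq \<alpha> n M x = 0" for n using True by (simp add: C_seq_def f_term_def)
  moreover have "sigma_ext \<alpha> x = 0" using True by (auto simp: sigma_ext_def)
  ultimately show ?thesis by (simp add: antimono_def)
next
  case False
  hence xp: "x > 0" using assms by simp
  define N where "N = nat \<lfloor>M\<rfloor>"
  have C: "C_seq \<alpha> n M x = (\<Sum>k\<in>{1..N}. f_term \<alpha> n x (real k))" for n
  proof -
    have "{0..N} = insert 0 {1..N}" by auto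
    thus ?thesis by (simp add: C_seq_def N_def f_term_def)
  qed
  have am: "antimono (\<lambda>n. C_seq \<alpha> n M x)"
    unfolding C
  proof (rule antimonoI, rule sum_mono)
    fix m n :: nat and k assume "m \<le> n" "k \<in> {1..N}"
    thus "f_term \<alpha> n x (real k) \<le> f_term \<alpha> m x (real k)"
      using term_props[of "real k" x \<alpha>] xp by (auto simp: antimono_def)
  qed
  have lim: "(\<lambda>n. C_seq \<alpha> n M x) \<longlonglongrightarrow> (\<Sum>k\<in>{1..N}. g_lim \<alpha> x (real k))"
    unfolding C by (rule tendsto_sum) (use term_props xp in auto)
  have val: "(\<Sum>k\<in>{1..N}. g_lim \<alpha> x (real k)) = sigma_ext \<alpha> x"
  proof (cases "\<exists>m::nat. m \<ge> 1 \<and> x = real m")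
    case True
    then obtain m :: nat where m: "m \<ge> 1" "x = real m" by blast
    have mN: "m \<le> N" using m assms unfolding N_def by linarith
    have gk: "g_lim \<alpha> x (real k) = (if k dvd m then real k powr \<alpha> else 0)" if "k \<ge> 1" for k
    proof -
      have "(\<exists>j::int. real m = of_int j * real k) \<longleftrightarrow> k dvd m"
      proof
        assume "\<exists>j::int. real m = of_int j * real k"
        then obtain j :: int where "real m = of_int j * real k" by blast
        hence "of_int (int m) = (of_int (j * int k) :: real)" by simp
        hence "int m = j * int k" by (simp only: of_int_eq_iff)
        hence "int k dvd int m" by simp
        thus "k dvd m" by simp
      next
        assume "k dvd m"
        then obtain c where "m = k * c" by (auto simp: dvd_def)
        thus "\<exists>j::int. real m = of_int j * real k" by (intro exI[of _ "int c"]) simp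
      qed
      thus ?thesis using that m by (simp add: g_lim_def)
    qed
    have "(\<Sum>k\<in>{1..N}. g_lim \<alpha> x (real k)) = (\<Sum>k\<in>{1..N}. if k dvd m then real k powr \<alpha> else 0)"
      by (rule sum.cong) (auto simp: gk)
    also have "\<dots> = (\<Sum>k\<in>{k\<in>{1..N}. k dvd m}. real k powr \<alpha>)"
      by (rule sum.inter_filter[symmetric]) simp
    also have "{k\<in>{1..N}. k dvd m} = {k. k dvd m}"
      using m mN by (auto dest: dvd_imp_le intro: Nat.le_trans)
    finally show ?thesis using True m by (simp add: sigma_ext_def)
  next
    case False
    have "g_lim \<alpha> x (real k) = 0" if "k \<ge> 1" for k
    proof (rule ccontr)
      assume "g_lim \<alpha> x (real k) \<noteq> 0"
      then obtain j :: int where j: "x = of_int j * real k" by (auto simp: g_lim_def split: if_splits)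
      hence "j > 0" using xp that by (smt (verit) mult_nonpos_nonneg of_int_le_0_iff of_nat_0_le_iff)
      hence "x = real (nat j * k)" using j by simp
      moreover have "nat j * k \<ge> 1" using \<open>j > 0\<close> that by simp
      ultimately show False using False by blast
    qed
    hence "(\<Sum>k\<in>{1..N}. g_lim \<alpha> x (real k)) = 0" by simp
    thus ?thesis unfolding sigma_ext_def if_not_P[OF False] by simp
  qed
  show ?thesis using am lim val by simp
qed

end
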